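(* Let $q\ge1$, $p>0$, let $A=(a_{ijk})_{i,j\le n,k\le m}$ be a real array and $U\subset B^n_2+\sqrt pB^n_1$. Then \[ \mathbb{E}^g\sup_{x\in U}\mathbb{E}^{g'}\sup_{t\in B_{q'}}\sum_{ijk}a_{ijk}g_ig'_ix_jt_k\le C(q)\sqrt{W_A}\,\sup_{x\in U}\varphi_A(x), \] where $C(q)$ depends only on $q$.
   Context: $(g_i),(g'_i)$ are independent sequences of i.i.d. standard Gaussians; $\mathbb{E}^g,\mathbb{E}^{g'}$ denote integration with respect to each. $q'$ is the Hölder conjugate of $q$ and $B_{q'}=\{t\in\mathbb{R}^m:\sum_k|t_k|^{q'}\le1\}$ (the sup-norm ball if $q=1$). $W_A=\big(\sum_k(\sum_{i,j}a_{ijk}^2)^{q/2}\big)^{1/q}$ and $\varphi_A(x)=\Big(\sum_k\Big(\sum_i\frac{(\sum_ja_{ijk}x_j)^4}{\sum_ja_{ijk}^2}\Big)^{q/2}\Big)^{1/(2q)}$, terms with $\sum_ja_{ijk}^2=0$ being omitted. *)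

theory Defs
  imports "HOL-Probability.Probability"
begin

text \<open>Vectors of R^n are represented as functions nat => real vanishing outside {..<n}.\<close>

definition gauss_vec :: "nat \<Rightarrow> (nat \<Rightarrow> real) measure" where
  "gauss_vec n = PiM {..<n} (\<lambda>_. std_normal_distribution)"

definition ball2_plus_ball1 :: "nat \<Rightarrow> real \<Rightarrow> (nat \<Rightarrow> real) set" where
  "ball2_plus_ball1 n p = {x. \<exists>y z. (\<forall>j. x j = y j + z j)
      \<and> (\<forall>j\<ge>n. y j = 0 \<and> z j = 0)
      \<and> (\<Sum>j<n. (y j)\<^sup>2) \<le> 1 \<and> (\<Sum>j<n. \<bar>z j\<bar>) \<le> sqrt p}"

text \<open>Hoelder conjugate exponent q' of q (q >= 1); for q = 1 the ball is the sup-norm ball.\<close>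
definition conj_ball :: "nat \<Rightarrow> real \<Rightarrow> (nat \<Rightarrow> real) set" where
  "conj_ball m q = {t. (\<forall>k\<ge>m. t k = 0) \<and>
     (if q = 1 then (\<forall>k<m. \<bar>t k\<bar> \<le> 1)
      else (\<Sum>k<m. \<bar>t k\<bar> powr (q / (q - 1))) \<le> 1)}"

definition W_A :: "nat \<Rightarrow> nat \<Rightarrow> real \<Rightarrow> (nat \<Rightarrow> nat \<Rightarrow> nat \<Rightarrow> real) \<Rightarrow> real" where
  "W_A n m q a = (\<Sum>k<m. (\<Sum>i<n. \<Sum>j<n. (a i j k)\<^sup>2) powr (q / 2)) powr (1 / q)"

definition phi_A :: "nat \<Rightarrow> nat \<Rightarrow> real \<Rightarrow> (nat \<Rightarrow> nat \<Rightarrow> nat \<Rightarrow> real) \<Rightarrow> (nat \<Rightarrow> real) \<Rightarrow> real" where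
  "phi_A n m q a x = (\<Sum>k<m. (\<Sum>i\<in>{i\<in>{..<n}. (\<Sum>j<n. (a i j k)\<^sup>2) \<noteq> 0}.
       (\<Sum>j<n. a i j k * x j) ^ 4 / (\<Sum>j<n. (a i j k)\<^sup>2)) powr (q / 2)) powr (1 / (2 * q))"

end

theory Submission
  imports Defs
begin


lemma prob_gauss: "prob_space (gauss_vec n)"
  unfolding gauss_vec_def
  by (intro prob_space_PiM) (simp add: prob_space_normal_density real_distribution.axioms(1) real_dist_normal_dist)

lemma sets_std: "sets std_normal_distribution = sets borel" by simp

lemma gauss_comp: "i < n \<Longrightarrow> distr (gauss_vec n) borel (\<lambda>\<omega>. \<omega> i) = std_normal_distribution"
proof -
  assume i: "i < n"
  have "distr (gauss_vec n) borel (\<lambda>\<omega>. \<omega> i) = distr (gauss_vec n) std_normal_distribution (\<lambda>\<omega>. \<omega> i)"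
    by (rule distr_cong) auto
  also have "\<dots> = std_normal_distribution"
    unfolding gauss_vec_def using i
    by (subst distr_PiM_component) (auto simp: real_distribution.axioms(1) real_dist_normal_dist)
  finally show ?thesis .
qed

lemma gauss_indep: assumes "0 < n"
  shows "prob_space.indep_vars (gauss_vec n) (\<lambda>_. borel) (\<lambda>i \<omega>. \<omega> i) {..<n}"
proof -
  interpret prob_space "gauss_vec n" by (rule prob_gauss)
  have "distr (gauss_vec n) (PiM {..<n} (\<lambda>_. borel)) (\<lambda>x. \<lambda>i\<in>{..<n}. x i)
      = distr (gauss_vec n) (gauss_vec n) (\<lambda>x. x)"
  proof (rule distr_cong)
    show "sets (PiM {..<n} (\<lambda>_. borel)) = sets (gauss_vec n)"
      unfolding gauss_vec_def by (rule sets_PiM_cong) auto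
    fix x assume "x \<in> space (gauss_vec n)"
    then show "(\<lambda>i\<in>{..<n}. x i) = x" unfolding gauss_vec_def
      by (auto simp: space_PiM PiE_def extensional_def restrict_def)
  qed auto
  also have "\<dots> = gauss_vec n" by simp
  also have "\<dots> = PiM {..<n} (\<lambda>i. distr (gauss_vec n) borel (\<lambda>\<omega>. \<omega> i))"
  proof -
    have "PiM {..<n} (\<lambda>i. distr (gauss_vec n) borel (\<lambda>\<omega>. \<omega> i)) = PiM {..<n} (\<lambda>_. std_normal_distribution)"
      by (rule PiM_cong) (simp_all add: gauss_comp)
    then show ?thesis by (simp add: gauss_vec_def)
  qed
  finally have eq: "distr (gauss_vec n) (PiM {..<n} (\<lambda>_. borel)) (\<lambda>x. \<lambda>i\<in>{..<n}. x i) = PiM {..<n} (\<lambda>i. distr (gauss_vec n) borel (\<lambda>\<omega>. \<omega> i))" .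
  have rv: "random_variable borel (\<lambda>\<omega>. \<omega> i)" if "i \<in> {..<n}" for i
  proof -
    have "(\<lambda>\<omega>. \<omega> i) \<in> measurable (PiM {..<n} (\<lambda>_. std_normal_distribution)) std_normal_distribution"
      using that by (rule measurable_component_singleton)
    then show ?thesis unfolding gauss_vec_def by (simp add: measurable_def)
  qed
  show ?thesis
    using assms rv eq by (subst indep_vars_iff_distr_eq_PiM') auto
qed



lemma gauss_coord_distributed:
  assumes "i < n"
  shows "distributed (gauss_vec n) lborel (\<lambda>\<omega>. \<omega> i) (\<lambda>x. ennreal (normal_density 0 1 x))"
proof -
  have "distr (gauss_vec n) lborel (\<lambda>\<omega>. \<omega> i) = distr (gauss_vec n) borel (\<lambda>\<omega>. \<omega> i)"
    by (rule distr_cong) auto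
  also have "\<dots> = density lborel (\<lambda>x. ennreal (normal_density 0 1 x))"
    using gauss_comp[OF assms] by simp
  finally have d: "distr (gauss_vec n) lborel (\<lambda>\<omega>. \<omega> i) = density lborel (\<lambda>x. ennreal (normal_density 0 1 x))" .
  have m: "(\<lambda>\<omega>. \<omega> i) \<in> measurable (gauss_vec n) lborel"
  proof -
    have "(\<lambda>\<omega>. \<omega> i) \<in> measurable (PiM {..<n} (\<lambda>_. std_normal_distribution)) std_normal_distribution"
      using assms by (intro measurable_component_singleton) auto
    then show ?thesis unfolding gauss_vec_def by (simp add: measurable_def)
  qed
  show ?thesis unfolding distributed_def using d m by simp
qed

lemma gauss_lin:
  fixes c :: "nat \<Rightarrow> real" and q :: real
  assumes q: "q > 0"
  shows "(\<integral>\<^sup>+\<omega>. ennreal (\<bar>\<Sum>i<n. c i * \<omega> i\<bar> powr q) \<partial>gauss_vec n)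
     = ennreal (sqrt (\<Sum>i<n. (c i)\<^sup>2) powr q) * (\<integral>\<^sup>+x. ennreal (\<bar>x\<bar> powr q) \<partial>std_normal_distribution)"
proof -
  interpret prob_space "gauss_vec n" by (rule prob_gauss)
  define \<sigma> where "\<sigma> = sqrt (\<Sum>i<n. (c i)\<^sup>2)"
  have s0: "0 \<le> \<sigma>" unfolding \<sigma>_def by (simp add: sum_nonneg)
  show ?thesis
  proof (cases "\<sigma> = 0")
    case True
    then have "\<forall>i\<in>{..<n}. (c i)\<^sup>2 = 0" unfolding \<sigma>_def
      by (subst sum_nonneg_eq_0_iff[symmetric]) auto
    then have "\<And>\<omega>. (\<Sum>i<n. c i * \<omega> i) = 0" by simp
    then show ?thesis using True by (simp add: \<sigma>_def[symmetric])
  next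
    case False
    then have sp: "\<sigma> > 0" using s0 by simp
    define I where "I = {i\<in>{..<n}. c i \<noteq> 0}"
    have fI: "finite I" unfolding I_def by simp
    have sumI: "(\<Sum>i\<in>I. f i) = (\<Sum>i<n. f i)" if "\<And>i. c i = 0 \<Longrightarrow> f i = 0" for f :: "nat \<Rightarrow> real"
      by (rule sum.mono_neutral_left) (auto simp: I_def that)
    have "I \<noteq> {}"
    proof
      assume "I = {}"
      then have "\<forall>i<n. c i = 0" unfolding I_def by auto
      then have "\<sigma> = 0" unfolding \<sigma>_def by simp
      then show False using False by simp
    qed
    define X where "X = (\<lambda>i (\<omega>::nat\<Rightarrow>real). c i / \<sigma> * \<omega> i)"
    have distX: "distributed (gauss_vec n) lborel (X i) (normal_density 0 (\<bar>c i / \<sigma>\<bar>))" if "i \<in> I" for i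
    proof -
      have "c i / \<sigma> \<noteq> 0" using that sp by (auto simp: I_def)
      have "i < n" using that by (simp add: I_def)
      from normal_density_affine[OF gauss_coord_distributed[OF this] zero_less_one \<open>c i / \<sigma> \<noteq> 0\<close>, where \<beta>=0]
      show ?thesis using that by (simp add: X_def I_def)
    qed
    have indX: "indep_vars (\<lambda>_. borel) X I"
    proof -
      have "indep_vars (\<lambda>_. borel) (\<lambda>i \<omega>. \<omega> i) I"
        using gauss_indep[of n] \<open>I \<noteq> {}\<close> by (rule_tac indep_vars_subset) (auto simp: I_def)
      from indep_vars_compose2[OF this, of "\<lambda>i x. c i / \<sigma> * x" "\<lambda>_. borel"]
      show ?thesis by (simp add: X_def)
    qed
    have pos: "\<And>i. i \<in> I \<Longrightarrow> 0 < \<bar>c i / \<sigma>\<bar>" using sp by (auto simp: I_def)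
    from sum_indep_normal[OF fI \<open>I \<noteq> {}\<close> indX pos distX]
    have D: "distributed (gauss_vec n) lborel (\<lambda>x. \<Sum>i\<in>I. X i x) (normal_density 0 (sqrt (\<Sum>i\<in>I. \<bar>c i / \<sigma>\<bar>\<^sup>2)))"
      by simp
    have "(\<Sum>i\<in>I. \<bar>c i / \<sigma>\<bar>\<^sup>2) = (\<Sum>i<n. (c i)\<^sup>2) / \<sigma>\<^sup>2"
      by (simp add: power_divide sum_divide_distrib sumI)
    also have "\<dots> = 1" using sp unfolding \<sigma>_def by (simp add: sum_nonneg)
    finally have D1: "distributed (gauss_vec n) lborel (\<lambda>x. \<Sum>i\<in>I. X i x) (normal_density 0 1)"
      using D by simp
    have eqS: "(\<Sum>i<n. c i * \<omega> i) = \<sigma> * (\<Sum>i\<in>I. X i \<omega>)" for \<omega>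
      using sp by (simp add: X_def sum_distrib_left sumI)
    have "(\<integral>\<^sup>+\<omega>. ennreal (\<bar>\<Sum>i<n. c i * \<omega> i\<bar> powr q) \<partial>gauss_vec n)
        = (\<integral>\<^sup>+\<omega>. ennreal (\<sigma> powr q) * ennreal (\<bar>\<Sum>i\<in>I. X i \<omega>\<bar> powr q) \<partial>gauss_vec n)"
      using s0 by (simp add: eqS abs_mult powr_mult ennreal_mult)
    also have "\<dots> = ennreal (\<sigma> powr q) * (\<integral>\<^sup>+\<omega>. ennreal (\<bar>\<Sum>i\<in>I. X i \<omega>\<bar> powr q) \<partial>gauss_vec n)"
      using D1 by (intro nn_integral_cmult) (auto simp: distributed_def)
    also have "(\<integral>\<^sup>+\<omega>. ennreal (\<bar>\<Sum>i\<in>I. X i \<omega>\<bar> powr q) \<partial>gauss_vec n)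
        = (\<integral>\<^sup>+x. ennreal (\<bar>x\<bar> powr q) \<partial>distr (gauss_vec n) lborel (\<lambda>x. \<Sum>i\<in>I. X i x))"
      using D1 by (subst nn_integral_distr) (auto simp: distributed_def)
    also have "\<dots> = (\<integral>\<^sup>+x. ennreal (\<bar>x\<bar> powr q) \<partial>std_normal_distribution)"
      using D1 by (simp add: distributed_def)
    finally show ?thesis by (simp add: \<sigma>_def)
  qed
qed



lemma young_pt:
  fixes f l r :: real
  assumes f: "0 \<le> f" and l: "0 < l" and r: "1 \<le> r"
  shows "f \<le> (1/r) * (l powr (1 - r) * f powr r) + (1 - 1/r) * l"
proof (cases "f = 0")
  case True then show ?thesis using l r by simp
next
  case False
  then have fp: "0 < f" using f by simp
  have "(l powr (1 - r) * f powr r) powr (1/r) * l powr (1 - 1/r) \<le> (1/r) * (l powr (1 - r) * f powr r) + (1 - 1/r) * l"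
    using r l fp by (intro Youngs_inequality_0) auto
  moreover have "(l powr (1 - r) * f powr r) powr (1/r) * l powr (1 - 1/r) = f"
  proof -
    have "(l powr (1 - r) * f powr r) powr (1/r) = l powr ((1 - r)/r) * f"
      using l fp r by (simp add: powr_mult powr_powr)
    then have "(l powr (1 - r) * f powr r) powr (1/r) * l powr (1 - 1/r) = f * (l powr ((1 - r)/r) * l powr (1 - 1/r))"
      by simp
    also have "l powr ((1 - r)/r) * l powr (1 - 1/r) = 1"
      using l r by (simp add: powr_add[symmetric] field_simps)
    finally show ?thesis by simp
  qed
  ultimately show ?thesis by simp
qed

lemma (in prob_space) jensen_powr:
  fixes f :: "'a \<Rightarrow> real" and r B :: real
  assumes fm: "f \<in> borel_measurable M" and f0: "\<And>x. 0 \<le> f x" and r: "1 \<le> r"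
    and B: "(\<integral>\<^sup>+x. ennreal (f x powr r) \<partial>M) \<le> ennreal B" and B0: "0 \<le> B"
  shows "(\<integral>\<^sup>+x. ennreal (f x) \<partial>M) \<le> ennreal (B powr (1/r))"
proof (cases "B = 0")
  case True
  then have "(\<integral>\<^sup>+x. ennreal (f x powr r) \<partial>M) = 0" using B by simp
  then have "AE x in M. ennreal (f x powr r) = 0"
    using fm by (subst nn_integral_0_iff_AE[symmetric]) auto
  then have "AE x in M. ennreal (f x) = 0"
  proof eventually_elim
    case (elim x)
    then have "f x powr r \<le> 0" by (simp add: ennreal_eq_0_iff)
    then have "f x powr r = 0" using powr_ge_zero[of "f x" r] by linarith
    then show ?case by simp
  qed
  then have "(\<integral>\<^sup>+x. ennreal (f x) \<partial>M) = (\<integral>\<^sup>+x. 0 \<partial>M)"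
    by (intro nn_integral_cong_AE) auto
  then show ?thesis by simp
next
  case False
  then have Bp: "0 < B" using B0 by simp
  define l where "l = B powr (1/r)"
  have lp: "0 < l" unfolding l_def using Bp by simp
  define a where "a = (1/r) * l powr (1 - r)"
  have a0: "0 \<le> a" unfolding a_def using r by simp
  have b0: "0 \<le> (1 - 1/r) * l" using r lp by (simp add: field_simps)
  have "(\<integral>\<^sup>+x. ennreal (f x) \<partial>M) \<le> (\<integral>\<^sup>+x. ennreal a * ennreal (f x powr r) + ennreal ((1 - 1/r) * l) \<partial>M)"
  proof (rule nn_integral_mono)
    fix x
    have "f x \<le> a * f x powr r + (1 - 1/r) * l"
      using young_pt[OF f0 lp r] unfolding a_def by (simp add: mult.assoc)
    then show "ennreal (f x) \<le> ennreal a * ennreal (f x powr r) + ennreal ((1 - 1/r) * l)"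
      using a0 b0 by (simp add: ennreal_mult[symmetric] ennreal_plus[symmetric] del: ennreal_plus)
  qed
  also have "\<dots> = ennreal a * (\<integral>\<^sup>+x. ennreal (f x powr r) \<partial>M) + ennreal ((1 - 1/r) * l)"
    using fm by (subst nn_integral_add) (auto simp: nn_integral_cmult emeasure_space_1)
  also have "\<dots> \<le> ennreal a * ennreal B + ennreal ((1 - 1/r) * l)"
    by (intro add_mono mult_left_mono B) auto
  also have "\<dots> = ennreal (a * B + (1 - 1/r) * l)"
    using a0 b0 Bp by (simp add: ennreal_mult ennreal_plus)
  also have "a * B + (1 - 1/r) * l = l"
  proof -
    have "l powr (1 - r) * B = l"
    proof -
      have "l powr (1 - r) * B = B powr ((1 - r)/r) * B powr 1"
        unfolding l_def using Bp r by (simp add: powr_powr)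
      also have "\<dots> = B powr ((1 - r)/r + 1)" by (simp add: powr_add)
      also have "(1 - r)/r + 1 = 1/r" using r by (simp add: field_simps)
      finally show ?thesis by (simp add: l_def)
    qed
    then show ?thesis unfolding a_def using r by (simp add: field_simps)
  qed
  finally show ?thesis by (simp add: l_def)
qed



lemma holder_sum:
  fixes u v :: "'a \<Rightarrow> real" and p r :: real
  assumes K: "finite K" and p: "p > 1" and r: "r > 1" and pr: "1/p + 1/r = 1"
    and u: "\<And>k. 0 \<le> u k" and v: "\<And>k. 0 \<le> v k"
  shows "(\<Sum>k\<in>K. u k * v k) \<le> (\<Sum>k\<in>K. u k powr p) powr (1/p) * (\<Sum>k\<in>K. v k powr r) powr (1/r)"
proof -
  define A where "A = (\<Sum>k\<in>K. u k powr p)"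
  define B where "B = (\<Sum>k\<in>K. v k powr r)"
  have A0: "0 \<le> A" "0 \<le> B" unfolding A_def B_def by (auto intro: sum_nonneg)
  show ?thesis
  proof (cases "A = 0 \<or> B = 0")
    case True
    then have "\<forall>k\<in>K. u k = 0 \<or> v k = 0"
      using K u v unfolding A_def B_def by (auto simp: sum_nonneg_eq_0_iff)
    then have "(\<Sum>k\<in>K. u k * v k) = 0" by (intro sum.neutral) auto
    then show ?thesis by (simp add: A_def[symmetric] B_def[symmetric])
  next
    case False
    then have Ap: "0 < A" "0 < B" using A0 by auto
    define \<alpha> where "\<alpha> = A powr (1/p)"
    define \<beta> where "\<beta> = B powr (1/r)"
    have ab: "0 < \<alpha>" "0 < \<beta>" unfolding \<alpha>_def \<beta>_def using Ap by auto
    have "(\<Sum>k\<in>K. (u k / \<alpha>) * (v k / \<beta>)) \<le> (\<Sum>k\<in>K. (u k / \<alpha>) powr p / p + (v k / \<beta>) powr r / r)"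
      using p r pr u v ab by (intro sum_mono Youngs_inequality) auto
    also have "\<dots> = (\<Sum>k\<in>K. u k powr p) / (\<alpha> powr p) / p + (\<Sum>k\<in>K. v k powr r) / (\<beta> powr r) / r"
      using u v ab by (simp add: powr_divide sum.distrib sum_divide_distrib)
    also have "\<alpha> powr p = A" unfolding \<alpha>_def using Ap p by (simp add: powr_powr)
    also have "\<beta> powr r = B" unfolding \<beta>_def using Ap r by (simp add: powr_powr)
    also have "(\<Sum>k\<in>K. u k powr p) / A / p + (\<Sum>k\<in>K. v k powr r) / B / r = 1"
      using Ap pr by (simp add: A_def[symmetric] B_def[symmetric])
    finally have "(\<Sum>k\<in>K. (u k / \<alpha>) * (v k / \<beta>)) \<le> 1" .
    moreover have "(\<Sum>k\<in>K. u k * v k) = \<alpha> * \<beta> * (\<Sum>k\<in>K. (u k / \<alpha>) * (v k / \<beta>))"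
      using ab by (simp add: sum_distrib_left)
    ultimately have "(\<Sum>k\<in>K. u k * v k) \<le> \<alpha> * \<beta>"
      using ab by (simp add: mult_left_le)
    then show ?thesis by (simp add: \<alpha>_def \<beta>_def A_def B_def)
  qed
qed

lemma stepA:
  fixes q :: real and Y :: "nat \<Rightarrow> real"
  assumes q: "1 \<le> q" and t: "t \<in> conj_ball m q"
  shows "(\<Sum>k<m. t k * Y k) \<le> (\<Sum>k<m. \<bar>Y k\<bar> powr q) powr (1/q)"
proof (cases "q = 1")
  case True
  then have tb: "\<And>k. k < m \<Longrightarrow> \<bar>t k\<bar> \<le> 1" using t by (simp add: conj_ball_def)
  have "(\<Sum>k<m. t k * Y k) \<le> (\<Sum>k<m. \<bar>Y k\<bar>)"
  proof (rule sum_mono)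
    fix k assume "k \<in> {..<m}"
    then have "\<bar>t k\<bar> \<le> 1" using tb by simp
    then have "\<bar>t k\<bar> * \<bar>Y k\<bar> \<le> \<bar>Y k\<bar>" by (simp add: mult_left_le_one_le)
    then show "t k * Y k \<le> \<bar>Y k\<bar>" by (metis abs_ge_self abs_mult order_trans)
  qed
  then show ?thesis using True by (simp add: sum_nonneg)
next
  case False
  then have q1: "q > 1" using q by simp
  define q' where "q' = q / (q - 1)"
  have q'1: "q' > 1" unfolding q'_def using q1 by (simp add: field_simps)
  have qq: "1/q' + 1/q = 1" unfolding q'_def using q1 by (simp add: field_simps)
  have tb: "(\<Sum>k<m. \<bar>t k\<bar> powr q') \<le> 1" using t False by (simp add: conj_ball_def q'_def)
  have "(\<Sum>k<m. t k * Y k) \<le> (\<Sum>k<m. \<bar>t k\<bar> * \<bar>Y k\<bar>)"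
    by (intro sum_mono) (metis abs_ge_self abs_mult)
  also have "\<dots> \<le> (\<Sum>k<m. \<bar>t k\<bar> powr q') powr (1/q') * (\<Sum>k<m. \<bar>Y k\<bar> powr q) powr (1/q)"
    by (rule holder_sum[OF _ q'1 q1 qq]) auto
  also have "\<dots> \<le> 1 * (\<Sum>k<m. \<bar>Y k\<bar> powr q) powr (1/q)"
    using tb q'1 by (intro mult_right_mono powr_le1) (auto simp: sum_nonneg)
  finally show ?thesis by simp
qed

lemma power_mean:
  fixes w y :: "'a \<Rightarrow> real" and R :: real
  assumes K: "finite K" and R: "1 \<le> R" and w: "\<And>k. 0 \<le> w k" and w1: "(\<Sum>k\<in>K. w k) = 1"
    and y: "\<And>k. 0 \<le> y k"
  shows "(\<Sum>k\<in>K. w k * y k) powr R \<le> (\<Sum>k\<in>K. w k * y k powr R)"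
proof (cases "R = 1")
  case True then show ?thesis using w y by (simp add: sum_nonneg)
next
  case False
  then have R1: "R > 1" using R by simp
  define R' where "R' = R / (R - 1)"
  have R'1: "R' > 1" unfolding R'_def using R1 by (simp add: field_simps)
  have RR: "1/R' + 1/R = 1" unfolding R'_def using R1 by (simp add: field_simps)
  have "(\<Sum>k\<in>K. w k * y k) = (\<Sum>k\<in>K. w k powr (1/R') * (w k powr (1/R) * y k))"
  proof (rule sum.cong)
    fix k
    have "w k powr (1/R') * w k powr (1/R) = w k"
    proof (cases "w k = 0")
      case False
      then show ?thesis using w[of k] RR by (simp add: powr_add[symmetric])
    qed simp
    then show "w k * y k = w k powr (1/R') * (w k powr (1/R) * y k)" by (simp add: mult.assoc[symmetric])
  qed simp
  also have "\<dots> \<le> (\<Sum>k\<in>K. (w k powr (1/R')) powr R') powr (1/R') * (\<Sum>k\<in>K. (w k powr (1/R) * y k) powr R) powr (1/R)"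
    by (rule holder_sum[OF K R'1 R1 RR]) (auto intro: mult_nonneg_nonneg y)
  also have "(\<Sum>k\<in>K. (w k powr (1/R')) powr R') = 1"
    using R'1 w w1 by (simp add: powr_powr)
  also have "(\<Sum>k\<in>K. (w k powr (1/R) * y k) powr R) = (\<Sum>k\<in>K. w k * y k powr R)"
    using R1 w y by (simp add: powr_mult powr_powr)
  finally have "(\<Sum>k\<in>K. w k * y k) \<le> (\<Sum>k\<in>K. w k * y k powr R) powr (1/R)" by simp
  then have "(\<Sum>k\<in>K. w k * y k) powr R \<le> ((\<Sum>k\<in>K. w k * y k powr R) powr (1/R)) powr R"
    using w y R1 by (intro powr_mono2) (auto intro: sum_nonneg)
  also have "\<dots> = (\<Sum>k\<in>K. w k * y k powr R)"
    using R1 w y by (simp add: powr_powr sum_nonneg)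
  finally show ?thesis .
qed



lemma holder2:
  fixes u v :: "'a \<Rightarrow> real"
  assumes K: "finite K" and u: "\<And>k. 0 \<le> u k" and v: "\<And>k. 0 \<le> v k"
  shows "(\<Sum>k\<in>K. u k * v k) \<le> (\<Sum>k\<in>K. u k powr 2) powr (1/2) * (\<Sum>k\<in>K. v k powr 2) powr (1/2)"
  using holder_sum[OF K _ _ _ u v, of 2 2] by simp

lemma stepB_k:
  fixes g :: "nat \<Rightarrow> real" and b s :: "nat \<Rightarrow> real"
  assumes s0: "\<And>i. 0 \<le> s i" and sb: "\<And>i. s i = 0 \<Longrightarrow> b i = 0"
  shows "(\<Sum>i<n. (g i * b i)\<^sup>2) \<le> (\<Sum>i<n. s i * g i ^ 4) powr (1/2) * (\<Sum>i\<in>{i\<in>{..<n}. s i \<noteq> 0}. b i ^ 4 / s i) powr (1/2)"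
proof -
  let ?I = "{i\<in>{..<n}. s i \<noteq> 0}"
  have "(\<Sum>i<n. (g i * b i)\<^sup>2) = (\<Sum>i\<in>?I. (g i * b i)\<^sup>2)"
    by (rule sum.mono_neutral_right) (auto simp: sb)
  also have "\<dots> = (\<Sum>i\<in>?I. ((g i)\<^sup>2 * sqrt (s i)) * ((b i)\<^sup>2 / sqrt (s i)))"
  proof (rule sum.cong)
    fix i assume "i \<in> ?I"
    then have "sqrt (s i) > 0" using s0[of i] by auto
    then show "(g i * b i)\<^sup>2 = ((g i)\<^sup>2 * sqrt (s i)) * ((b i)\<^sup>2 / sqrt (s i))"
      by (simp add: power_mult_distrib)
  qed simp
  also have "\<dots> \<le> (\<Sum>i\<in>?I. ((g i)\<^sup>2 * sqrt (s i)) powr 2) powr (1/2) * (\<Sum>i\<in>?I. ((b i)\<^sup>2 / sqrt (s i)) powr 2) powr (1/2)"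
    by (rule holder2) (auto simp: s0)
  also have "(\<Sum>i\<in>?I. ((g i)\<^sup>2 * sqrt (s i)) powr 2) = (\<Sum>i<n. s i * g i ^ 4)"
  proof -
    have "(\<Sum>i\<in>?I. ((g i)\<^sup>2 * sqrt (s i)) powr 2) = (\<Sum>i\<in>?I. s i * g i ^ 4)"
    proof (rule sum.cong)
      fix i assume "i \<in> ?I"
      then have "s i > 0" using s0[of i] by auto
      then show "((g i)\<^sup>2 * sqrt (s i)) powr 2 = s i * g i ^ 4"
        by (subst powr_numeral) (auto simp: power_mult_distrib)
    qed simp
    also have "\<dots> = (\<Sum>i<n. s i * g i ^ 4)"
      by (rule sum.mono_neutral_left) auto
    finally show ?thesis .
  qed
  also have "(\<Sum>i\<in>?I. ((b i)\<^sup>2 / sqrt (s i)) powr 2) = (\<Sum>i\<in>?I. b i ^ 4 / s i)"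
  proof (rule sum.cong)
    fix i assume "i \<in> ?I"
    then have "s i > 0" using s0[of i] by auto
    then show "((b i)\<^sup>2 / sqrt (s i)) powr 2 = b i ^ 4 / s i"
      by (subst powr_numeral) (auto simp: power_divide)
  qed simp
  finally show ?thesis .
qed

lemma stepB:
  fixes g :: "nat \<Rightarrow> real" and b s :: "nat \<Rightarrow> nat \<Rightarrow> real" and q :: real
  assumes q: "1 \<le> q" and s0: "\<And>i k. 0 \<le> s i k" and sb: "\<And>i k. s i k = 0 \<Longrightarrow> b i k = 0"
  shows "(\<Sum>k<m. (\<Sum>i<n. (g i * b i k)\<^sup>2) powr (q/2))
    \<le> (\<Sum>k<m. (\<Sum>i<n. s i k * g i ^ 4) powr (q/2)) powr (1/2)
      * (\<Sum>k<m. (\<Sum>i\<in>{i\<in>{..<n}. s i k \<noteq> 0}. b i k ^ 4 / s i k) powr (q/2)) powr (1/2)"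
proof -
  define P where "P k = (\<Sum>i<n. s i k * g i ^ 4)" for k
  define Q where "Q k = (\<Sum>i\<in>{i\<in>{..<n}. s i k \<noteq> 0}. b i k ^ 4 / s i k)" for k
  have P0: "0 \<le> P k" for k unfolding P_def by (auto intro!: sum_nonneg simp: s0)
  have Q0: "0 \<le> Q k" for k unfolding Q_def by (auto intro!: sum_nonneg divide_nonneg_nonneg simp: s0)
  have "(\<Sum>k<m. (\<Sum>i<n. (g i * b i k)\<^sup>2) powr (q/2)) \<le> (\<Sum>k<m. (P k powr (1/2) * Q k powr (1/2)) powr (q/2))"
  proof (rule sum_mono)
    fix k
    show "(\<Sum>i<n. (g i * b i k)\<^sup>2) powr (q/2) \<le> (P k powr (1/2) * Q k powr (1/2)) powr (q/2)"
      using stepB_k[where s="\<lambda>i. s i k" and b="\<lambda>i. b i k" and n=n and g=g] s0 sb q unfolding P_def Q_def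
      by (intro powr_mono2) (auto intro: sum_nonneg)
  qed
  also have "\<dots> = (\<Sum>k<m. (P k powr (q/2)) powr (1/2) * (Q k powr (q/2)) powr (1/2))"
    using P0 Q0 by (simp add: powr_mult powr_powr mult.commute)
  also have "\<dots> \<le> (\<Sum>k<m. ((P k powr (q/2)) powr (1/2)) powr 2) powr (1/2) * (\<Sum>k<m. ((Q k powr (q/2)) powr (1/2)) powr 2) powr (1/2)"
    by (rule holder2) auto
  also have "\<dots> = (\<Sum>k<m. P k powr (q/2)) powr (1/2) * (\<Sum>k<m. Q k powr (q/2)) powr (1/2)"
    by (simp add: powr_powr)
  finally show ?thesis unfolding P_def Q_def .
qed



lemma gauss_coord_meas[measurable]: "i \<in> {..<n} \<Longrightarrow> (\<lambda>\<omega>. \<omega> i) \<in> borel_measurable (gauss_vec n)"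
proof -
  assume "i \<in> {..<n}"
  then have "(\<lambda>\<omega>. \<omega> i) \<in> measurable (PiM {..<n} (\<lambda>_. std_normal_distribution)) std_normal_distribution"
    by (intro measurable_component_singleton) auto
  then show ?thesis unfolding gauss_vec_def by (simp add: measurable_def)
qed

lemma test_meas: "(\<lambda>\<omega>. ennreal ((\<Sum>i<n. s i * \<omega> i ^ 4) powr r)) \<in> borel_measurable (gauss_vec n)"
  by measurable

lemma gauss_coord_int:
  assumes "i < n" and h: "h \<in> borel_measurable borel"
  shows "(\<integral>\<^sup>+\<omega>. h (\<omega> i) \<partial>gauss_vec n) = (\<integral>\<^sup>+x. h x \<partial>std_normal_distribution)"
proof -
  have "(\<integral>\<^sup>+x. h x \<partial>std_normal_distribution) = (\<integral>\<^sup>+x. h x \<partial>distr (gauss_vec n) borel (\<lambda>\<omega>. \<omega> i))"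
    using gauss_comp[OF assms(1)] by simp
  also have "\<dots> = (\<integral>\<^sup>+\<omega>. h (\<omega> i) \<partial>gauss_vec n)"
    using assms by (subst nn_integral_distr) auto
  finally show ?thesis by simp
qed



lemma pow_le_one_plus:
  fixes z r R :: real
  assumes "0 \<le> z" "0 < r" "r \<le> R"
  shows "z powr r \<le> 1 + z powr R"
proof (cases "z \<le> 1")
  case True
  then have "z powr r \<le> 1" using assms by (simp add: powr_le1)
  then show ?thesis by (smt (verit) powr_ge_zero)
next
  case False
  then have "z powr r \<le> z powr R" using assms by (intro powr_mono) auto
  then show ?thesis by simp
qed

lemma stepD:
  fixes s :: "nat \<Rightarrow> real" and r :: real
  assumes s0: "\<And>i. 0 \<le> s i" and r: "0 < r"
  shows "(\<integral>\<^sup>+\<omega>. ennreal ((\<Sum>i<n. s i * \<omega> i ^ 4) powr r) \<partial>gauss_vec n)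
     \<le> ennreal ((\<Sum>i<n. s i) powr r) * (1 + (\<integral>\<^sup>+x. ennreal (\<bar>x\<bar> powr (4 * max r 1)) \<partial>std_normal_distribution))"
proof -
  interpret prob_space "gauss_vec n" by (rule prob_gauss)
  define S where "S = (\<Sum>i<n. s i)"
  define R where "R = max r 1"
  define Mo where "Mo = (\<integral>\<^sup>+x. ennreal (\<bar>x\<bar> powr (4 * R)) \<partial>std_normal_distribution)"
  have S0: "0 \<le> S" unfolding S_def by (simp add: sum_nonneg s0)
  show ?thesis
  proof (cases "S = 0")
    case True
    then have "\<forall>i\<in>{..<n}. s i = 0" unfolding S_def using s0 by (subst sum_nonneg_eq_0_iff[symmetric]) auto
    then show ?thesis by simp
  next
    case False
    then have Sp: "0 < S" using S0 by simp
    define w where "w i = s i / S" for i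
    have w0: "0 \<le> w i" for i unfolding w_def using s0 Sp by simp
    have w1: "(\<Sum>i<n. w i) = 1" unfolding w_def using Sp by (simp add: sum_divide_distrib[symmetric] S_def)
    have pt: "ennreal ((\<Sum>i<n. s i * \<omega> i ^ 4) powr r)
        \<le> ennreal (S powr r) * (1 + (\<Sum>i<n. ennreal (w i) * ennreal (\<bar>\<omega> i\<bar> powr (4 * R))))" for \<omega>
    proof -
      have y0: "0 \<le> (\<Sum>i<n. w i * \<omega> i ^ 4)" using w0 by (auto intro!: sum_nonneg)
      have "(\<Sum>i<n. s i * \<omega> i ^ 4) = S * (\<Sum>i<n. w i * \<omega> i ^ 4)"
        unfolding w_def using Sp by (simp add: sum_distrib_left)
      then have "(\<Sum>i<n. s i * \<omega> i ^ 4) powr r = S powr r * (\<Sum>i<n. w i * \<omega> i ^ 4) powr r"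
        using Sp y0 by (simp add: powr_mult)
      also have "\<dots> \<le> S powr r * (1 + (\<Sum>i<n. w i * \<omega> i ^ 4) powr R)"
        using y0 r by (intro mult_left_mono pow_le_one_plus) (auto simp: R_def)
      also have "\<dots> \<le> S powr r * (1 + (\<Sum>i<n. w i * (\<omega> i ^ 4) powr R))"
        using w0 w1 by (intro mult_left_mono add_left_mono power_mean) (auto simp: R_def)
      also have "(\<Sum>i<n. w i * (\<omega> i ^ 4) powr R) = (\<Sum>i<n. w i * \<bar>\<omega> i\<bar> powr (4 * R))"
      proof (rule sum.cong)
        fix i
        have e: "\<omega> i ^ 4 = \<bar>\<omega> i\<bar> powr 4"
          by (cases "\<omega> i = 0") (auto simp: powr_realpow)
        then show "w i * (\<omega> i ^ 4) powr R = w i * \<bar>\<omega> i\<bar> powr (4 * R)"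
          by (simp only: e powr_powr)
      qed simp
      finally have "(\<Sum>i<n. s i * \<omega> i ^ 4) powr r \<le> S powr r * (1 + (\<Sum>i<n. w i * \<bar>\<omega> i\<bar> powr (4 * R)))" .
      then have "ennreal ((\<Sum>i<n. s i * \<omega> i ^ 4) powr r) \<le> ennreal (S powr r * (1 + (\<Sum>i<n. w i * \<bar>\<omega> i\<bar> powr (4 * R))))"
        by (rule ennreal_leI)
      also have "\<dots> = ennreal (S powr r) * (1 + (\<Sum>i<n. ennreal (w i) * ennreal (\<bar>\<omega> i\<bar> powr (4 * R))))"
      proof -
        let ?T = "(\<Sum>i<n. w i * \<bar>\<omega> i\<bar> powr (4 * R))"
        have T0: "0 \<le> ?T" using w0 by (auto intro!: sum_nonneg)
        have "ennreal (S powr r * (1 + ?T)) = ennreal (S powr r) * ennreal (1 + ?T)"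
          using T0 by (intro ennreal_mult) auto
        also have "ennreal (1 + ?T) = 1 + ennreal ?T"
          using T0 by (subst ennreal_plus) auto
        also have "ennreal ?T = (\<Sum>i<n. ennreal (w i * \<bar>\<omega> i\<bar> powr (4 * R)))"
          using w0 by (intro sum_ennreal[symmetric]) auto
        also have "\<dots> = (\<Sum>i<n. ennreal (w i) * ennreal (\<bar>\<omega> i\<bar> powr (4 * R)))"
          using w0 by (intro sum.cong refl ennreal_mult) auto
        finally show ?thesis .
      qed
      finally show ?thesis .
    qed
    have "(\<integral>\<^sup>+\<omega>. ennreal ((\<Sum>i<n. s i * \<omega> i ^ 4) powr r) \<partial>gauss_vec n)
        \<le> (\<integral>\<^sup>+\<omega>. ennreal (S powr r) * (1 + (\<Sum>i<n. ennreal (w i) * ennreal (\<bar>\<omega> i\<bar> powr (4 * R)))) \<partial>gauss_vec n)"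
      by (intro nn_integral_mono pt)
    also have "\<dots> = ennreal (S powr r) * (1 + (\<Sum>i<n. ennreal (w i) * Mo))"
    proof -
      have "(\<integral>\<^sup>+\<omega>. ennreal (S powr r) * (1 + (\<Sum>i<n. ennreal (w i) * ennreal (\<bar>\<omega> i\<bar> powr (4 * R)))) \<partial>gauss_vec n)
          = ennreal (S powr r) * (\<integral>\<^sup>+\<omega>. 1 + (\<Sum>i<n. ennreal (w i) * ennreal (\<bar>\<omega> i\<bar> powr (4 * R))) \<partial>gauss_vec n)"
        by (rule nn_integral_cmult) measurable
      also have "(\<integral>\<^sup>+\<omega>. 1 + (\<Sum>i<n. ennreal (w i) * ennreal (\<bar>\<omega> i\<bar> powr (4 * R))) \<partial>gauss_vec n)
          = 1 + (\<integral>\<^sup>+\<omega>. (\<Sum>i<n. ennreal (w i) * ennreal (\<bar>\<omega> i\<bar> powr (4 * R))) \<partial>gauss_vec n)"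
        by (subst nn_integral_add) (auto simp: emeasure_space_1)
      also have "(\<integral>\<^sup>+\<omega>. (\<Sum>i<n. ennreal (w i) * ennreal (\<bar>\<omega> i\<bar> powr (4 * R))) \<partial>gauss_vec n)
          = (\<Sum>i<n. \<integral>\<^sup>+\<omega>. ennreal (w i) * ennreal (\<bar>\<omega> i\<bar> powr (4 * R)) \<partial>gauss_vec n)"
        by (rule nn_integral_sum) auto
      also have "\<dots> = (\<Sum>i<n. ennreal (w i) * Mo)"
      proof (rule sum.cong)
        fix i assume i: "i \<in> {..<n}"
        have "(\<integral>\<^sup>+\<omega>. ennreal (w i) * ennreal (\<bar>\<omega> i\<bar> powr (4 * R)) \<partial>gauss_vec n)
            = ennreal (w i) * (\<integral>\<^sup>+\<omega>. ennreal (\<bar>\<omega> i\<bar> powr (4 * R)) \<partial>gauss_vec n)"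
          using i by (intro nn_integral_cmult) measurable
        also have "(\<integral>\<^sup>+\<omega>. ennreal (\<bar>\<omega> i\<bar> powr (4 * R)) \<partial>gauss_vec n) = Mo"
          unfolding Mo_def using i by (intro gauss_coord_int[where h="\<lambda>x. ennreal (\<bar>x\<bar> powr (4 * R))"]) auto
        finally show "(\<integral>\<^sup>+\<omega>. ennreal (w i) * ennreal (\<bar>\<omega> i\<bar> powr (4 * R)) \<partial>gauss_vec n) = ennreal (w i) * Mo" .
      qed simp
      finally show ?thesis .
    qed
    also have "(\<Sum>i<n. ennreal (w i) * Mo) = Mo"
    proof -
      have "(\<Sum>i<n. ennreal (w i) * Mo) = (\<Sum>i<n. ennreal (w i)) * Mo"
        by (rule sum_distrib_right[symmetric])
      also have "(\<Sum>i<n. ennreal (w i)) = ennreal (\<Sum>i<n. w i)"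
        using w0 by (intro sum_ennreal) auto
      finally show ?thesis using w1 by simp
    qed
    finally show ?thesis by (simp add: S_def Mo_def R_def)
  qed
qed



lemma moment_finite:
  fixes c :: real assumes c: "0 < c"
  shows "(\<integral>\<^sup>+x. ennreal (\<bar>x\<bar> powr c) \<partial>std_normal_distribution) < \<infinity>"
proof -
  define N where "N = nat \<lceil>c\<rceil>"
  have cN: "c \<le> real (2 * N)" unfolding N_def by linarith
  interpret prob_space std_normal_distribution
    using real_dist_normal_dist real_distribution.axioms(1) by blast
  have "(\<integral>\<^sup>+x. ennreal (\<bar>x\<bar> powr c) \<partial>std_normal_distribution)
      \<le> (\<integral>\<^sup>+x. 1 + ennreal (norm (x ^ (2 * N))) \<partial>std_normal_distribution)"
  proof (rule nn_integral_mono)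
    fix x :: real
    have "\<bar>x\<bar> powr c \<le> 1 + \<bar>x\<bar> powr real (2 * N)"
      using c cN by (intro pow_le_one_plus) auto
    also have "\<bar>x\<bar> powr real (2 * N) = norm (x ^ (2 * N))"
    proof (cases "x = 0")
      case True
      have "0 < N" unfolding N_def using c by simp
      then show ?thesis using True by simp
    next
      case False
      then have "\<bar>x\<bar> powr real (2 * N) = \<bar>x\<bar> ^ (2 * N)" by (intro powr_realpow) simp
      then show ?thesis by (simp add: power_abs)
    qed
    finally show "ennreal (\<bar>x\<bar> powr c) \<le> 1 + ennreal (norm (x ^ (2 * N)))"
      by (metis ennreal_1 ennreal_leI ennreal_plus norm_ge_zero zero_le_one)
  qed
  also have "\<dots> = 1 + (\<integral>\<^sup>+x. ennreal (norm (x ^ (2 * N))) \<partial>std_normal_distribution)"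
    using emeasure_space_1 by (subst nn_integral_add) auto
  also have "\<dots> < \<infinity>"
    using integrable_std_normal_distribution_moment[of "2 * N"]
    by (simp add: integrable_iff_bounded)
  finally show ?thesis .
qed



lemma rearr:
  fixes a :: "nat \<Rightarrow> nat \<Rightarrow> nat \<Rightarrow> real"
  shows "(\<Sum>i<n. \<Sum>j<n. \<Sum>k<m. a i j k * g i * g' i * x j * t k)
    = (\<Sum>k<m. t k * (\<Sum>i<n. (g i * (\<Sum>j<n. a i j k * x j)) * g' i))"
proof -
  have "(\<Sum>i<n. \<Sum>j<n. \<Sum>k<m. a i j k * g i * g' i * x j * t k)
      = (\<Sum>i<n. \<Sum>k<m. \<Sum>j<n. a i j k * g i * g' i * x j * t k)"
    by (intro sum.cong refl sum.swap)
  also have "\<dots> = (\<Sum>k<m. \<Sum>i<n. \<Sum>j<n. a i j k * g i * g' i * x j * t k)"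
    by (rule sum.swap)
  also have "\<dots> = (\<Sum>k<m. t k * (\<Sum>i<n. (g i * (\<Sum>j<n. a i j k * x j)) * g' i))"
    by (simp add: sum_distrib_left sum_distrib_right mult_ac)
  finally show ?thesis .
qed

lemma inner_bound:
  fixes q m1 :: real and a :: "nat \<Rightarrow> nat \<Rightarrow> nat \<Rightarrow> real" and g x :: "nat \<Rightarrow> real"
  assumes q: "1 \<le> q" and m1: "(\<integral>\<^sup>+x. ennreal (\<bar>x\<bar> powr q) \<partial>std_normal_distribution) = ennreal m1" and m10: "0 \<le> m1"
  shows "(\<integral>\<^sup>+g'. (SUP t\<in>conj_ball m q. ennreal (\<Sum>i<n. \<Sum>j<n. \<Sum>k<m. a i j k * g i * g' i * x j * t k)) \<partial>gauss_vec n)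
     \<le> ennreal (m1 powr (1/q) * (\<Sum>k<m. (\<Sum>i<n. (\<Sum>j<n. (a i j k)\<^sup>2) * g i ^ 4) powr (q/2)) powr (1/(2*q)) * phi_A n m q a x)"
proof -
  interpret prob_space "gauss_vec n" by (rule prob_gauss)
  define b where "b i k = (\<Sum>j<n. a i j k * x j)" for i k
  define s where "s i k = (\<Sum>j<n. (a i j k)\<^sup>2)" for i k
  define Y where "Y g' k = (\<Sum>i<n. (g i * b i k) * g' i)" for g' :: "nat \<Rightarrow> real" and k
  define N where "N g' = (\<Sum>k<m. \<bar>Y g' k\<bar> powr q) powr (1/q)" for g'
  define G where "G = (\<Sum>k<m. (\<Sum>i<n. s i k * g i ^ 4) powr (q/2))"
  define Q where "Q = (\<Sum>k<m. (\<Sum>i\<in>{i\<in>{..<n}. s i k \<noteq> 0}. b i k ^ 4 / s i k) powr (q/2))"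
  have s0: "0 \<le> s i k" for i k unfolding s_def by (auto intro: sum_nonneg)
  have sb: "b i k = 0" if "s i k = 0" for i k
  proof -
    have "\<forall>j\<in>{..<n}. (a i j k)\<^sup>2 = 0" using that unfolding s_def
      by (subst sum_nonneg_eq_0_iff[symmetric]) auto
    then show ?thesis unfolding b_def by simp
  qed
  have G0: "0 \<le> G" unfolding G_def by (auto intro: sum_nonneg)
  have Q0: "0 \<le> Q" unfolding Q_def by (auto intro: sum_nonneg)
  have phi: "phi_A n m q a x = Q powr (1/(2*q))"
    unfolding phi_A_def Q_def b_def s_def ..
  have N0: "0 \<le> N g'" for g' unfolding N_def by simp
  have step2: "(SUP t\<in>conj_ball m q. ennreal (\<Sum>i<n. \<Sum>j<n. \<Sum>k<m. a i j k * g i * g' i * x j * t k)) \<le> ennreal (N g')" for g'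
  proof (rule SUP_least)
    fix t assume t: "t \<in> conj_ball m q"
    have "(\<Sum>i<n. \<Sum>j<n. \<Sum>k<m. a i j k * g i * g' i * x j * t k) = (\<Sum>k<m. t k * Y g' k)"
      unfolding rearr Y_def b_def ..
    also have "\<dots> \<le> N g'" unfolding N_def by (rule stepA[OF q t])
    finally show "ennreal (\<Sum>i<n. \<Sum>j<n. \<Sum>k<m. a i j k * g i * g' i * x j * t k) \<le> ennreal (N g')"
      by (rule ennreal_leI)
  qed
  define Bq where "Bq = m1 * (\<Sum>k<m. (\<Sum>i<n. (g i * b i k)\<^sup>2) powr (q/2))"
  have Bq0: "0 \<le> Bq" unfolding Bq_def using m10 by (intro mult_nonneg_nonneg sum_nonneg) auto
  have Nm: "N \<in> borel_measurable (gauss_vec n)" unfolding N_def Y_def by measurable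
  have step3: "(\<integral>\<^sup>+g'. ennreal (N g') \<partial>gauss_vec n) \<le> ennreal (Bq powr (1/q))"
  proof (rule jensen_powr[OF Nm N0 q _ Bq0])
    have "(\<integral>\<^sup>+g'. ennreal (N g' powr q) \<partial>gauss_vec n) = (\<integral>\<^sup>+g'. (\<Sum>k<m. ennreal (\<bar>Y g' k\<bar> powr q)) \<partial>gauss_vec n)"
    proof (rule nn_integral_cong)
      fix g' :: "nat \<Rightarrow> real"
      have "N g' powr q = (\<Sum>k<m. \<bar>Y g' k\<bar> powr q)"
        unfolding N_def using q by (simp add: powr_powr sum_nonneg)
      then show "ennreal (N g' powr q) = (\<Sum>k<m. ennreal (\<bar>Y g' k\<bar> powr q))"
        by (simp add: sum_ennreal)
    qed
    also have "\<dots> = (\<Sum>k<m. \<integral>\<^sup>+g'. ennreal (\<bar>Y g' k\<bar> powr q) \<partial>gauss_vec n)"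
      by (rule nn_integral_sum) (auto simp: Y_def)
    also have "\<dots> = (\<Sum>k<m. ennreal (sqrt (\<Sum>i<n. (g i * b i k)\<^sup>2) powr q) * ennreal m1)"
    proof (rule sum.cong)
      fix k
      show "(\<integral>\<^sup>+g'. ennreal (\<bar>Y g' k\<bar> powr q) \<partial>gauss_vec n) = ennreal (sqrt (\<Sum>i<n. (g i * b i k)\<^sup>2) powr q) * ennreal m1"
        unfolding Y_def using gauss_lin[where q=q and c="\<lambda>i. g i * b i k" and n=n] q m1 by simp
    qed simp
    also have "\<dots> = (\<Sum>k<m. ennreal (m1 * (\<Sum>i<n. (g i * b i k)\<^sup>2) powr (q/2)))"
    proof (rule sum.cong)
      fix k
      have X0: "0 \<le> (\<Sum>i<n. (g i * b i k)\<^sup>2)" by (auto intro: sum_nonneg)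
      then have "sqrt (\<Sum>i<n. (g i * b i k)\<^sup>2) powr q = (\<Sum>i<n. (g i * b i k)\<^sup>2) powr (q/2)"
        by (simp add: powr_half_sqrt[symmetric] powr_powr)
      then show "ennreal (sqrt (\<Sum>i<n. (g i * b i k)\<^sup>2) powr q) * ennreal m1 = ennreal (m1 * (\<Sum>i<n. (g i * b i k)\<^sup>2) powr (q/2))"
        using m10 by (simp add: ennreal_mult mult.commute)
    qed simp
    also have "\<dots> = ennreal Bq"
      unfolding Bq_def using m10 by (simp add: sum_ennreal sum_distrib_left)
    finally show "(\<integral>\<^sup>+g'. ennreal (N g' powr q) \<partial>gauss_vec n) \<le> ennreal Bq" by simp
  qed
  have step4: "Bq powr (1/q) \<le> m1 powr (1/q) * G powr (1/(2*q)) * Q powr (1/(2*q))"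
  proof -
    have "(\<Sum>k<m. (\<Sum>i<n. (g i * b i k)\<^sup>2) powr (q/2)) \<le> G powr (1/2) * Q powr (1/2)"
      unfolding G_def Q_def by (rule stepB[OF q s0 sb])
    then have "Bq \<le> m1 * (G powr (1/2) * Q powr (1/2))"
      unfolding Bq_def using m10 by (intro mult_left_mono) auto
    then have "Bq powr (1/q) \<le> (m1 * (G powr (1/2) * Q powr (1/2))) powr (1/q)"
      using Bq0 q by (intro powr_mono2) auto
    also have "\<dots> = m1 powr (1/q) * G powr (1/(2*q)) * Q powr (1/(2*q))"
      using m10 G0 Q0 by (simp add: powr_mult powr_powr)
    finally show ?thesis .
  qed
  have "(\<integral>\<^sup>+g'. (SUP t\<in>conj_ball m q. ennreal (\<Sum>i<n. \<Sum>j<n. \<Sum>k<m. a i j k * g i * g' i * x j * t k)) \<partial>gauss_vec n)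
      \<le> (\<integral>\<^sup>+g'. ennreal (N g') \<partial>gauss_vec n)"
    by (intro nn_integral_mono step2)
  also have "\<dots> \<le> ennreal (Bq powr (1/q))" by (rule step3)
  also have "\<dots> \<le> ennreal (m1 powr (1/q) * G powr (1/(2*q)) * phi_A n m q a x)"
    using step4 by (intro ennreal_leI) (simp add: phi)
  finally show ?thesis unfolding G_def s_def .
qed



lemma G_bound:
  fixes q :: real and a :: "nat \<Rightarrow> nat \<Rightarrow> nat \<Rightarrow> real" and k0 :: real
  assumes q: "1 \<le> q"
    and K: "1 + (\<integral>\<^sup>+x. ennreal (\<bar>x\<bar> powr (4 * max (q/2) 1)) \<partial>std_normal_distribution) = ennreal k0"
    and k0: "0 \<le> k0"
  shows "(\<integral>\<^sup>+g. ennreal (\<Sum>k<m. (\<Sum>i<n. (\<Sum>j<n. (a i j k)\<^sup>2) * g i ^ 4) powr (q/2)) \<partial>gauss_vec n)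
     \<le> ennreal (k0 * W_A n m q a powr q)"
proof -
  have "(\<integral>\<^sup>+g. ennreal (\<Sum>k<m. (\<Sum>i<n. (\<Sum>j<n. (a i j k)\<^sup>2) * g i ^ 4) powr (q/2)) \<partial>gauss_vec n)
      = (\<integral>\<^sup>+g. (\<Sum>k<m. ennreal ((\<Sum>i<n. (\<Sum>j<n. (a i j k)\<^sup>2) * g i ^ 4) powr (q/2))) \<partial>gauss_vec n)"
    by (intro nn_integral_cong) (simp add: sum_ennreal)
  also have "\<dots> = (\<Sum>k<m. \<integral>\<^sup>+g. ennreal ((\<Sum>i<n. (\<Sum>j<n. (a i j k)\<^sup>2) * g i ^ 4) powr (q/2)) \<partial>gauss_vec n)"
    by (rule nn_integral_sum) auto
  also have "\<dots> \<le> (\<Sum>k<m. ennreal ((\<Sum>i<n. \<Sum>j<n. (a i j k)\<^sup>2) powr (q/2)) * ennreal k0)"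
  proof (rule sum_mono)
    fix k
    show "(\<integral>\<^sup>+g. ennreal ((\<Sum>i<n. (\<Sum>j<n. (a i j k)\<^sup>2) * g i ^ 4) powr (q/2)) \<partial>gauss_vec n)
        \<le> ennreal ((\<Sum>i<n. \<Sum>j<n. (a i j k)\<^sup>2) powr (q/2)) * ennreal k0"
      using stepD[where s="\<lambda>i. \<Sum>j<n. (a i j k)\<^sup>2" and r="q/2" and n=n] q K
      by (simp add: sum_nonneg)
  qed
  also have "\<dots> = ennreal (k0 * (\<Sum>k<m. (\<Sum>i<n. \<Sum>j<n. (a i j k)\<^sup>2) powr (q/2)))"
    using k0 by (simp add: ennreal_mult[symmetric] sum_ennreal sum_distrib_left mult.commute)
  also have "(\<Sum>k<m. (\<Sum>i<n. \<Sum>j<n. (a i j k)\<^sup>2) powr (q/2)) = W_A n m q a powr q"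
    unfolding W_A_def using q by (simp add: powr_powr sum_nonneg)
  finally show ?thesis .
qed

theorem lemma5p1:
  "\<forall>q::real. q \<ge> 1 \<longrightarrow> (\<exists>C::real. \<forall>(p::real) (n::nat) (m::nat)
      (a::nat \<Rightarrow> nat \<Rightarrow> nat \<Rightarrow> real) (U::(nat \<Rightarrow> real) set).
     p > 0 \<longrightarrow> U \<subseteq> ball2_plus_ball1 n p \<longrightarrow>
     (\<integral>\<^sup>+ g. (SUP x\<in>U. \<integral>\<^sup>+ g'. (SUP t\<in>conj_ball m q.
            ennreal (\<Sum>i<n. \<Sum>j<n. \<Sum>k<m. a i j k * g i * g' i * x j * t k)) \<partial>gauss_vec n) \<partial>gauss_vec n)
     \<le> ennreal (C * sqrt (W_A n m q a)) * (SUP x\<in>U. ennreal (phi_A n m q a x)))"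
proof (intro allI impI)
  fix q :: real assume q: "1 \<le> q"
  define M1 where "M1 = (\<integral>\<^sup>+x. ennreal (\<bar>x\<bar> powr q) \<partial>std_normal_distribution)"
  define K1 where "K1 = (\<integral>\<^sup>+x. ennreal (\<bar>x\<bar> powr (4 * max (q/2) 1)) \<partial>std_normal_distribution)"
  have M1f: "M1 < \<infinity>" unfolding M1_def using q by (intro moment_finite) auto
  have K1f: "K1 < \<infinity>" unfolding K1_def by (intro moment_finite) auto
  define m1 where "m1 = enn2real M1"
  define k0 where "k0 = 1 + enn2real K1"
  have m1: "M1 = ennreal m1" unfolding m1_def using M1f by simp
  have m10: "0 \<le> m1" unfolding m1_def by simp
  have k: "1 + K1 = ennreal k0" unfolding k0_def using K1f by (simp add: ennreal_plus)
  have k0: "0 \<le> k0" unfolding k0_def by simp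
  show "\<exists>C. \<forall>p n m a U. p > 0 \<longrightarrow> U \<subseteq> ball2_plus_ball1 n p \<longrightarrow>
     (\<integral>\<^sup>+ g. (SUP x\<in>U. \<integral>\<^sup>+ g'. (SUP t\<in>conj_ball m q.
            ennreal (\<Sum>i<n. \<Sum>j<n. \<Sum>k<m. a i j k * g i * g' i * x j * t k)) \<partial>gauss_vec n) \<partial>gauss_vec n)
     \<le> ennreal (C * sqrt (W_A n m q a)) * (SUP x\<in>U. ennreal (phi_A n m q a x))"
  proof (intro exI allI impI)
    fix p :: real and n m :: nat and a :: "nat \<Rightarrow> nat \<Rightarrow> nat \<Rightarrow> real" and U :: "(nat \<Rightarrow> real) set"
    interpret prob_space "gauss_vec n" by (rule prob_gauss)
    define G where "G g = (\<Sum>k<m. (\<Sum>i<n. (\<Sum>j<n. (a i j k)\<^sup>2) * g i ^ 4) powr (q/2))" for g :: "nat \<Rightarrow> real"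
    define W where "W = W_A n m q a"
    define \<Phi> where "\<Phi> = (SUP x\<in>U. ennreal (phi_A n m q a x))"
    have G0: "0 \<le> G g" for g unfolding G_def by (auto intro: sum_nonneg)
    have W0: "0 \<le> W" unfolding W_def W_A_def by simp
    have Gm: "G \<in> borel_measurable (gauss_vec n)" unfolding G_def by measurable
    have pt: "(SUP x\<in>U. \<integral>\<^sup>+ g'. (SUP t\<in>conj_ball m q.
            ennreal (\<Sum>i<n. \<Sum>j<n. \<Sum>k<m. a i j k * g i * g' i * x j * t k)) \<partial>gauss_vec n)
          \<le> ennreal (m1 powr (1/q)) * ennreal (G g powr (1/(2*q))) * \<Phi>" for g
    proof (rule SUP_least)
      fix x assume x: "x \<in> U"
      have "(\<integral>\<^sup>+ g'. (SUP t\<in>conj_ball m q.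
            ennreal (\<Sum>i<n. \<Sum>j<n. \<Sum>k<m. a i j k * g i * g' i * x j * t k)) \<partial>gauss_vec n)
          \<le> ennreal (m1 powr (1/q) * G g powr (1/(2*q)) * phi_A n m q a x)"
        unfolding G_def by (rule inner_bound[OF q m1[unfolded M1_def] m10])
      also have "\<dots> = ennreal (m1 powr (1/q)) * ennreal (G g powr (1/(2*q))) * ennreal (phi_A n m q a x)"
        by (simp add: ennreal_mult phi_A_def)
      also have "\<dots> \<le> ennreal (m1 powr (1/q)) * ennreal (G g powr (1/(2*q))) * \<Phi>"
        unfolding \<Phi>_def using x by (intro mult_left_mono SUP_upper) auto
      finally show "(\<integral>\<^sup>+ g'. (SUP t\<in>conj_ball m q.
            ennreal (\<Sum>i<n. \<Sum>j<n. \<Sum>k<m. a i j k * g i * g' i * x j * t k)) \<partial>gauss_vec n)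
          \<le> ennreal (m1 powr (1/q)) * ennreal (G g powr (1/(2*q))) * \<Phi>" .
    qed
    have J: "(\<integral>\<^sup>+g. ennreal (G g powr (1/(2*q))) \<partial>gauss_vec n) \<le> ennreal ((k0 * W powr q) powr (1/(2*q)))"
    proof (rule jensen_powr)
      show "(\<lambda>g. G g powr (1/(2*q))) \<in> borel_measurable (gauss_vec n)" using Gm by measurable
      show "(\<integral>\<^sup>+g. ennreal ((G g powr (1/(2*q))) powr (2*q)) \<partial>gauss_vec n) \<le> ennreal (k0 * W powr q)"
      proof -
        have "(\<integral>\<^sup>+g. ennreal ((G g powr (1/(2*q))) powr (2*q)) \<partial>gauss_vec n) = (\<integral>\<^sup>+g. ennreal (G g) \<partial>gauss_vec n)"
          using q G0 by (intro nn_integral_cong) (simp add: powr_powr)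
        also have "\<dots> \<le> ennreal (k0 * W powr q)"
          unfolding G_def W_def by (rule G_bound[OF q k[unfolded K1_def] k0])
        finally show ?thesis .
      qed
    qed (use q k0 W0 in auto)
    have "(\<integral>\<^sup>+ g. (SUP x\<in>U. \<integral>\<^sup>+ g'. (SUP t\<in>conj_ball m q.
            ennreal (\<Sum>i<n. \<Sum>j<n. \<Sum>k<m. a i j k * g i * g' i * x j * t k)) \<partial>gauss_vec n) \<partial>gauss_vec n)
        \<le> (\<integral>\<^sup>+ g. ennreal (m1 powr (1/q)) * ennreal (G g powr (1/(2*q))) * \<Phi> \<partial>gauss_vec n)"
      by (intro nn_integral_mono pt)
    also have "\<dots> = ennreal (m1 powr (1/q)) * (\<integral>\<^sup>+ g. ennreal (G g powr (1/(2*q))) \<partial>gauss_vec n) * \<Phi>"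
      using Gm by (simp add: nn_integral_multc nn_integral_cmult)
    also have "\<dots> \<le> ennreal (m1 powr (1/q)) * ennreal ((k0 * W powr q) powr (1/(2*q))) * \<Phi>"
      by (intro mult_right_mono mult_left_mono J) auto
    also have "(k0 * W powr q) powr (1/(2*q)) = k0 powr (1/(2*q)) * sqrt W"
      using k0 W0 q by (simp add: powr_mult powr_powr powr_half_sqrt[symmetric])
    also have "ennreal (m1 powr (1/q)) * ennreal (k0 powr (1/(2*q)) * sqrt W)
        = ennreal (m1 powr (1/q) * k0 powr (1/(2*q)) * sqrt W)"
      using W0 by (simp add: ennreal_mult mult.assoc)
    finally show "(\<integral>\<^sup>+ g. (SUP x\<in>U. \<integral>\<^sup>+ g'. (SUP t\<in>conj_ball m q.
            ennreal (\<Sum>i<n. \<Sum>j<n. \<Sum>k<m. a i j k * g i * g' i * x j * t k)) \<partial>gauss_vec n) \<partial>gauss_vec n)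
     \<le> ennreal (m1 powr (1/q) * k0 powr (1/(2*q)) * sqrt (W_A n m q a)) * (SUP x\<in>U. ennreal (phi_A n m q a x))"
      unfolding W_def \<Phi>_def .
  qed
qed


end
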